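(* Let $A$ be a Banach algebra, $\phi\in\Delta(A)$, and $I$ a closed two-sided ideal of $A$ with $\phi|_I\neq0$. If $A$ is approximately left $\phi$-biprojective, then $I$ is approximately left $\phi|_I$-biprojective.
   Context: $\Delta(A)$ is the set of characters of $A$; $A\otimes_pA$ is the projective tensor product with $a\cdot(b\otimes c)=ab\otimes c$, $(b\otimes c)\cdot a=b\otimes ca$, $\pi_A(a\otimes b)=ab$. For a Banach algebra $A$ and $\phi\in\Delta(A)$, $A$ is approximately left $\phi$-biprojective if there is a net $(\rho_\alpha)$ of bounded linear maps $A\to A\otimes_pA$ such that for all $a,x\in A$: $\|a\cdot\rho_\alpha(x)-\rho_\alpha(ax)\|\to0$, $\|\rho_\alpha(xa)-\phi(a)\rho_\alpha(x)\|\to0$, and $\phi(\pi_A(\rho_\alpha(x)))-\phi(x)\to0$. *)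

theory Defs
  imports "HOL-Analysis.Analysis"
begin

text \<open>A complex Banach algebra (not necessarily unital): the type carries a real Banach
algebra structure together with a complex scalar multiplication sc extending scaleR.\<close>

definition cBA :: "(complex \<Rightarrow> 'a::{real_normed_algebra,banach} \<Rightarrow> 'a) \<Rightarrow> bool" where
  "cBA sc \<longleftrightarrow>
     (\<forall>r x. sc (complex_of_real r) x = scaleR r x) \<and>
     (\<forall>c d x. sc (c * d) x = sc c (sc d x)) \<and>
     (\<forall>c x y. sc c (x + y) = sc c x + sc c y) \<and>
     (\<forall>c d x. sc (c + d) x = sc c x + sc d x) \<and>
     (\<forall>c x. norm (sc c x) = cmod c * norm x) \<and>
     (\<forall>c x y. sc c (x * y) = sc c x * y \<and> sc c (x * y) = x * sc c y)"

definition closed_ideal :: "(complex \<Rightarrow> 'a::{real_normed_algebra,banach} \<Rightarrow> 'a) \<Rightarrow> 'a set \<Rightarrow> bool" where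
  "closed_ideal sc I \<longleftrightarrow> closed I \<and> 0 \<in> I \<and>
     (\<forall>x\<in>I. \<forall>y\<in>I. x + y \<in> I) \<and> (\<forall>c. \<forall>x\<in>I. sc c x \<in> I) \<and>
     (\<forall>a. \<forall>x\<in>I. a * x \<in> I \<and> x * a \<in> I)"

text \<open>Characters of the (sub)algebra S: nonzero multiplicative complex-linear functionals on S.
Delta(A) is characters sc UNIV; phi restricted to I is phi considered on the carrier I.\<close>

definition characters :: "(complex \<Rightarrow> 'a::{real_normed_algebra,banach} \<Rightarrow> 'a) \<Rightarrow> 'a set \<Rightarrow> ('a \<Rightarrow> complex) set" where
  "characters sc S = {\<phi>.
     (\<forall>x\<in>S. \<forall>y\<in>S. \<phi> (x + y) = \<phi> x + \<phi> y) \<and>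
     (\<forall>c. \<forall>x\<in>S. \<phi> (sc c x) = c * \<phi> x) \<and>
     (\<forall>x\<in>S. \<forall>y\<in>S. \<phi> (x * y) = \<phi> x * \<phi> y) \<and>
     (\<exists>x\<in>S. \<phi> x \<noteq> 0)}"

text \<open>Bounded complex-bilinear forms on S x S (extended by 0 outside S). These form the
dual of the projective tensor product S \<otimes>_p S.\<close>

definition bilforms :: "(complex \<Rightarrow> 'a::{real_normed_algebra,banach} \<Rightarrow> 'a) \<Rightarrow> 'a set \<Rightarrow> ('a \<Rightarrow> 'a \<Rightarrow> complex) set" where
  "bilforms sc S = {B.
     (\<forall>x1\<in>S. \<forall>x2\<in>S. \<forall>y\<in>S. B (x1 + x2) y = B x1 y + B x2 y) \<and>
     (\<forall>x\<in>S. \<forall>y1\<in>S. \<forall>y2\<in>S. B x (y1 + y2) = B x y1 + B x y2) \<and>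
     (\<forall>c. \<forall>x\<in>S. \<forall>y\<in>S. B (sc c x) y = c * B x y \<and> B x (sc c y) = c * B x y) \<and>
     (\<exists>K. \<forall>x\<in>S. \<forall>y\<in>S. cmod (B x y) \<le> K * norm x * norm y) \<and>
     (\<forall>x y. x \<notin> S \<or> y \<notin> S \<longrightarrow> B x y = 0)}"

definition bilball :: "(complex \<Rightarrow> 'a::{real_normed_algebra,banach} \<Rightarrow> 'a) \<Rightarrow> 'a set \<Rightarrow> ('a \<Rightarrow> 'a \<Rightarrow> complex) set" where
  "bilball sc S = {B \<in> bilforms sc S. \<forall>x\<in>S. \<forall>y\<in>S. cmod (B x y) \<le> norm x * norm y}"

text \<open>Representations of elements of S \<otimes>_p S: u = sum a n \<otimes> b n with
sum norm (a n) * norm (b n) finite.\<close>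

definition ptrep :: "(complex \<Rightarrow> 'a::{real_normed_algebra,banach} \<Rightarrow> 'a) \<Rightarrow> 'a set
     \<Rightarrow> (('a \<Rightarrow> 'a \<Rightarrow> complex) \<Rightarrow> complex) \<Rightarrow> (nat \<Rightarrow> 'a) \<Rightarrow> (nat \<Rightarrow> 'a) \<Rightarrow> bool" where
  "ptrep sc S u a b \<longleftrightarrow> (\<forall>n. a n \<in> S \<and> b n \<in> S) \<and> summable (\<lambda>n. norm (a n) * norm (b n)) \<and>
     (\<forall>B\<in>bilforms sc S. u B = (\<Sum>n. B (a n) (b n)))"

text \<open>The completed projective tensor product S \<otimes>_p S, realised (via its canonical
isometric embedding into the bidual) as functionals on bounded bilinear forms.\<close>

definition ptensor :: "(complex \<Rightarrow> 'a::{real_normed_algebra,banach} \<Rightarrow> 'a) \<Rightarrow> 'a set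
     \<Rightarrow> (('a \<Rightarrow> 'a \<Rightarrow> complex) \<Rightarrow> complex) set" where
  "ptensor sc S = {u. (\<exists>a b. ptrep sc S u a b) \<and> (\<forall>B. B \<notin> bilforms sc S \<longrightarrow> u B = 0)}"

text \<open>Projective norm (equal, by duality, to inf of sum norm a n * norm b n).\<close>

definition ptnorm :: "(complex \<Rightarrow> 'a::{real_normed_algebra,banach} \<Rightarrow> 'a) \<Rightarrow> 'a set
     \<Rightarrow> (('a \<Rightarrow> 'a \<Rightarrow> complex) \<Rightarrow> complex) \<Rightarrow> real" where
  "ptnorm sc S u = (SUP B\<in>bilball sc S. cmod (u B))"

definition ptdiff :: "(('a \<Rightarrow> 'a \<Rightarrow> complex) \<Rightarrow> complex) \<Rightarrow> (('a \<Rightarrow> 'a \<Rightarrow> complex) \<Rightarrow> complex)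
     \<Rightarrow> (('a \<Rightarrow> 'a \<Rightarrow> complex) \<Rightarrow> complex)" where
  "ptdiff u v = (\<lambda>B. u B - v B)"

text \<open>Module actions: a \<cdot> (b \<otimes> c) = ab \<otimes> c and (b \<otimes> c) \<cdot> a = b \<otimes> ca.\<close>

definition lmod :: "(complex \<Rightarrow> 'a::{real_normed_algebra,banach} \<Rightarrow> 'a) \<Rightarrow> 'a set \<Rightarrow> 'a
     \<Rightarrow> (('a \<Rightarrow> 'a \<Rightarrow> complex) \<Rightarrow> complex) \<Rightarrow> (('a \<Rightarrow> 'a \<Rightarrow> complex) \<Rightarrow> complex)" where
  "lmod sc S a u = (\<lambda>B. if B \<in> bilforms sc S
       then u (\<lambda>y z. if y \<in> S \<and> z \<in> S then B (a * y) z else 0) else 0)"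

definition rmod :: "(complex \<Rightarrow> 'a::{real_normed_algebra,banach} \<Rightarrow> 'a) \<Rightarrow> 'a set
     \<Rightarrow> (('a \<Rightarrow> 'a \<Rightarrow> complex) \<Rightarrow> complex) \<Rightarrow> 'a \<Rightarrow> (('a \<Rightarrow> 'a \<Rightarrow> complex) \<Rightarrow> complex)" where
  "rmod sc S u a = (\<lambda>B. if B \<in> bilforms sc S
       then u (\<lambda>y z. if y \<in> S \<and> z \<in> S then B y (z * a) else 0) else 0)"

definition tpi :: "(complex \<Rightarrow> 'a::{real_normed_algebra,banach} \<Rightarrow> 'a) \<Rightarrow> 'a set
     \<Rightarrow> (('a \<Rightarrow> 'a \<Rightarrow> complex) \<Rightarrow> complex) \<Rightarrow> 'a" where
  "tpi sc S u = (let r = (SOME r. ptrep sc S u (fst r) (snd r)) in (\<Sum>n. fst r n * snd r n))"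

definition bdd_lin_pt :: "(complex \<Rightarrow> 'a::{real_normed_algebra,banach} \<Rightarrow> 'a) \<Rightarrow> 'a set
     \<Rightarrow> ('a \<Rightarrow> (('a \<Rightarrow> 'a \<Rightarrow> complex) \<Rightarrow> complex)) \<Rightarrow> bool" where
  "bdd_lin_pt sc S \<rho> \<longleftrightarrow> (\<forall>x\<in>S. \<rho> x \<in> ptensor sc S) \<and>
     (\<forall>x\<in>S. \<forall>y\<in>S. \<rho> (x + y) = (\<lambda>B. \<rho> x B + \<rho> y B)) \<and>
     (\<forall>c. \<forall>x\<in>S. \<rho> (sc c x) = (\<lambda>B. c * \<rho> x B)) \<and>
     (\<exists>K. \<forall>x\<in>S. ptnorm sc S (\<rho> x) \<le> K * norm x)"

text \<open>Approximate left phi-biprojectivity of the Banach algebra S (S = UNIV for A itself, S = I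
for an ideal, with phi then meaning its restriction to I). The net (rho_alpha) is represented
by a proper filter F on the space of maps (a net is its pushforward tail filter).\<close>

definition approx_left_biproj :: "(complex \<Rightarrow> 'a::{real_normed_algebra,banach} \<Rightarrow> 'a) \<Rightarrow> 'a set
     \<Rightarrow> ('a \<Rightarrow> complex) \<Rightarrow> bool" where
  "approx_left_biproj sc S \<phi> \<longleftrightarrow>
     (\<exists>F :: ('a \<Rightarrow> (('a \<Rightarrow> 'a \<Rightarrow> complex) \<Rightarrow> complex)) filter.
        F \<noteq> bot \<and> eventually (bdd_lin_pt sc S) F \<and>
        (\<forall>a\<in>S. \<forall>x\<in>S.
           ((\<lambda>\<rho>. ptnorm sc S (ptdiff (lmod sc S a (\<rho> x)) (\<rho> (a * x)))) \<longlongrightarrow> 0) F \<and>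
           ((\<lambda>\<rho>. ptnorm sc S (ptdiff (\<rho> (x * a)) (\<lambda>B. \<phi> a * \<rho> x B))) \<longlongrightarrow> 0) F \<and>
           ((\<lambda>\<rho>. \<phi> (tpi sc S (\<rho> x)) - \<phi> x) \<longlongrightarrow> 0) F))"

end

theory Submission
  imports Defs
begin

lemma cBA_real: "cBA sc \<Longrightarrow> sc (complex_of_real r) x = scaleR r x" unfolding cBA_def by blast
lemma cBA_ml: "cBA sc \<Longrightarrow> sc c (x * y) = sc c x * y" unfolding cBA_def by blast
lemma cBA_mr: "cBA sc \<Longrightarrow> sc c (x * y) = x * sc c y" unfolding cBA_def by blast
lemma cBA_norm: "cBA sc \<Longrightarrow> norm (sc c x) = cmod c * norm x" unfolding cBA_def by blast
lemma cBA_assoc: "cBA sc \<Longrightarrow> sc (c * d) x = sc c (sc d x)" unfolding cBA_def by blast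

lemma char_add: "\<phi> \<in> characters sc UNIV \<Longrightarrow> \<phi> (x + y) = \<phi> x + \<phi> y" by (simp add: characters_def)
lemma char_sc: "\<phi> \<in> characters sc UNIV \<Longrightarrow> \<phi> (sc c x) = c * \<phi> x" by (simp add: characters_def)
lemma char_mult: "\<phi> \<in> characters sc UNIV \<Longrightarrow> \<phi> (x * y) = \<phi> x * \<phi> y" by (simp add: characters_def)
lemma char_zero: "\<phi> \<in> characters sc UNIV \<Longrightarrow> \<phi> 0 = 0"
  using char_add[of \<phi> sc 0 0] by simp

lemma char_bound:
  fixes sc :: "complex \<Rightarrow> 'a::{real_normed_algebra,banach} \<Rightarrow> 'a"
  assumes sc: "cBA sc" and ph: "\<phi> \<in> characters sc UNIV"
  shows "cmod (\<phi> x) \<le> norm x"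
proof (rule ccontr)
  assume "\<not> cmod (\<phi> x) \<le> norm x"
  hence lt: "norm x < cmod (\<phi> x)" by simp
  hence l0: "\<phi> x \<noteq> 0" by auto
  define y where "y = sc (1 / \<phi> x) x"
  have py: "\<phi> y = 1" using l0 by (simp add: y_def char_sc[OF ph])
  have ny: "norm y < 1" using lt l0
    by (simp add: y_def cBA_norm[OF sc] norm_divide field_simps)
  define p where "p n = ((\<lambda>z. y * z) ^^ n) y" for n
  have pS: "p (Suc n) = y * p n" for n by (simp add: p_def)
  have pn: "norm (p n) \<le> norm y ^ Suc n" for n
  proof (induction n)
    case 0 then show ?case by (simp add: p_def)
  next
    case (Suc n)
    have "norm (p (Suc n)) \<le> norm y * norm (p n)" by (simp add: pS norm_mult_ineq)
    also have "\<dots> \<le> norm y * norm y ^ Suc n" using Suc by (simp add: mult_left_mono)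
    finally show ?case by simp
  qed
  have sg: "summable (\<lambda>n. norm y ^ Suc n)"
    using ny by (simp add: summable_mult[of "\<lambda>n. norm y ^ n" "norm y"] summable_geometric)
  have sp: "summable p"
    by (rule summable_comparison_test[OF _ sg]) (use pn in auto)
  define z where "z = suminf p"
  have "(\<Sum>n. p (Suc n)) = z - p 0" using suminf_split_head[OF sp] by (simp add: z_def)
  moreover have "(\<Sum>n. p (Suc n)) = y * z" unfolding pS z_def by (rule suminf_mult[OF sp])
  ultimately have "z = y + y * z" by (simp add: p_def algebra_simps)
  hence "\<phi> z = \<phi> y + \<phi> y * \<phi> z" by (metis char_add[OF ph] char_mult[OF ph])
  thus False using py by simp
qed

lemma char_bl:
  fixes sc :: "complex \<Rightarrow> 'a::{real_normed_algebra,banach} \<Rightarrow> 'a"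
  assumes sc: "cBA sc" and ph: "\<phi> \<in> characters sc UNIV"
  shows "bounded_linear \<phi>"
proof (rule bounded_linear_intro[where K=1])
  fix x y show "\<phi> (x + y) = \<phi> x + \<phi> y" by (rule char_add[OF ph])
next
  fix r x show "\<phi> (scaleR r x) = scaleR r (\<phi> x)"
    using char_sc[OF ph, of "complex_of_real r" x] cBA_real[OF sc]
    by (simp add: scaleR_conv_of_real)
next
  fix x show "norm (\<phi> x) \<le> norm x * 1" using char_bound[OF sc ph] by simp
qed


lemma ci_add: "closed_ideal sc S \<Longrightarrow> x \<in> S \<Longrightarrow> y \<in> S \<Longrightarrow> x + y \<in> S"
  unfolding closed_ideal_def by blast
lemma ci_sc: "closed_ideal sc S \<Longrightarrow> x \<in> S \<Longrightarrow> sc c x \<in> S"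
  unfolding closed_ideal_def by blast
lemma ci_ml: "closed_ideal sc S \<Longrightarrow> x \<in> S \<Longrightarrow> a * x \<in> S"
  unfolding closed_ideal_def by blast
lemma ci_mr: "closed_ideal sc S \<Longrightarrow> x \<in> S \<Longrightarrow> x * a \<in> S"
  unfolding closed_ideal_def by blast
lemma ci_UNIV: "closed_ideal sc UNIV"
  unfolding closed_ideal_def by simp

lemma zero_ball: "(\<lambda>x y. 0) \<in> bilball sc S"
  unfolding bilball_def bilforms_def by (auto intro!: exI[of _ 0])

lemma bf_addl: "B \<in> bilforms sc S \<Longrightarrow> x1 \<in> S \<Longrightarrow> x2 \<in> S \<Longrightarrow> y \<in> S \<Longrightarrow> B (x1 + x2) y = B x1 y + B x2 y"
  unfolding bilforms_def by blast
lemma bf_addr: "B \<in> bilforms sc S \<Longrightarrow> x \<in> S \<Longrightarrow> y1 \<in> S \<Longrightarrow> y2 \<in> S \<Longrightarrow> B x (y1 + y2) = B x y1 + B x y2"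
  unfolding bilforms_def by blast
lemma bf_scl: "B \<in> bilforms sc S \<Longrightarrow> x \<in> S \<Longrightarrow> y \<in> S \<Longrightarrow> B (sc c x) y = c * B x y"
  unfolding bilforms_def by blast
lemma bf_scr: "B \<in> bilforms sc S \<Longrightarrow> x \<in> S \<Longrightarrow> y \<in> S \<Longrightarrow> B x (sc c y) = c * B x y"
  unfolding bilforms_def by blast
lemma bf_bound: "B \<in> bilforms sc S \<Longrightarrow> \<exists>K\<ge>0. \<forall>x\<in>S. \<forall>y\<in>S. cmod (B x y) \<le> K * norm x * norm y"
proof -
  assume "B \<in> bilforms sc S"
  then obtain K where K: "\<forall>x\<in>S. \<forall>y\<in>S. cmod (B x y) \<le> K * norm x * norm y"
    unfolding bilforms_def by blast
  have "\<forall>x\<in>S. \<forall>y\<in>S. cmod (B x y) \<le> max K 0 * norm x * norm y"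
  proof (intro ballI)
    fix x y assume "x \<in> S" "y \<in> S"
    hence "cmod (B x y) \<le> K * norm x * norm y" using K by blast
    also have "\<dots> \<le> max K 0 * norm x * norm y"
      by (intro mult_right_mono) auto
    finally show "cmod (B x y) \<le> max K 0 * norm x * norm y" .
  qed
  thus ?thesis by (intro exI[of _ "max K 0"]) auto
qed
lemma bf_out: "B \<in> bilforms sc S \<Longrightarrow> x \<notin> S \<or> y \<notin> S \<Longrightarrow> B x y = 0"
  unfolding bilforms_def by blast
lemma bilformsI:
  assumes "\<And>x1 x2 y. x1 \<in> S \<Longrightarrow> x2 \<in> S \<Longrightarrow> y \<in> S \<Longrightarrow> B (x1 + x2) y = B x1 y + B x2 y"
    and "\<And>x y1 y2. x \<in> S \<Longrightarrow> y1 \<in> S \<Longrightarrow> y2 \<in> S \<Longrightarrow> B x (y1 + y2) = B x y1 + B x y2"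
    and "\<And>c x y. x \<in> S \<Longrightarrow> y \<in> S \<Longrightarrow> B (sc c x) y = c * B x y"
    and "\<And>c x y. x \<in> S \<Longrightarrow> y \<in> S \<Longrightarrow> B x (sc c y) = c * B x y"
    and "\<And>x y. x \<in> S \<Longrightarrow> y \<in> S \<Longrightarrow> cmod (B x y) \<le> K * norm x * norm y"
    and "\<And>x y. x \<notin> S \<or> y \<notin> S \<Longrightarrow> B x y = 0"
  shows "B \<in> bilforms sc S"
  unfolding bilforms_def using assms by blast

lemma form_pull:
  fixes sc :: "complex \<Rightarrow> 'a::{real_normed_algebra,banach} \<Rightarrow> 'a"
  assumes sc: "cBA sc" and I: "closed_ideal sc I" and i0: "i0 \<in> I" "i0 \<noteq> 0"
    and B: "B \<in> bilforms sc I"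
  shows "(\<lambda>y z. B (y * i0) (i0 * z) / complex_of_real (norm i0 ^ 2)) \<in> bilforms sc UNIV"
proof -
  obtain K where K: "K \<ge> 0" "\<forall>x\<in>I. \<forall>y\<in>I. cmod (B x y) \<le> K * norm x * norm y"
    using bf_bound[OF B] by blast
  have n0: "norm i0 ^ 2 > 0" using i0 by simp
  have yi: "y * i0 \<in> I" for y using ci_ml[OF I i0(1)] .
  have iz: "i0 * z \<in> I" for z using ci_mr[OF I i0(1)] .
  show ?thesis
  proof (rule bilformsI[where K = "K"])
    fix x1 x2 y show "B ((x1 + x2) * i0) (i0 * y) / complex_of_real ((norm i0)\<^sup>2) =
       B (x1 * i0) (i0 * y) / complex_of_real ((norm i0)\<^sup>2) + B (x2 * i0) (i0 * y) / complex_of_real ((norm i0)\<^sup>2)"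
      by (simp add: distrib_right bf_addl[OF B yi yi iz] add_divide_distrib)
  next
    fix x y1 y2 show "B (x * i0) (i0 * (y1 + y2)) / complex_of_real ((norm i0)\<^sup>2) =
       B (x * i0) (i0 * y1) / complex_of_real ((norm i0)\<^sup>2) + B (x * i0) (i0 * y2) / complex_of_real ((norm i0)\<^sup>2)"
      by (simp add: distrib_left bf_addr[OF B yi iz iz] add_divide_distrib)
  next
    fix c x y show "B (sc c x * i0) (i0 * y) / complex_of_real ((norm i0)\<^sup>2) =
       c * (B (x * i0) (i0 * y) / complex_of_real ((norm i0)\<^sup>2))"
      using bf_scl[OF B yi iz, where c=c] cBA_ml[OF sc, of c x i0, symmetric] by simp
  next
    fix c x y show "B (x * i0) (i0 * sc c y) / complex_of_real ((norm i0)\<^sup>2) =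
       c * (B (x * i0) (i0 * y) / complex_of_real ((norm i0)\<^sup>2))"
      using bf_scr[OF B yi iz, where c=c] cBA_mr[OF sc, of c i0 y, symmetric] by simp
  next
    fix x y :: 'a
    have "cmod (B (x * i0) (i0 * y)) \<le> K * norm (x * i0) * norm (i0 * y)" using K yi iz by blast
    also have "\<dots> \<le> K * (norm x * norm i0) * (norm i0 * norm y)"
      using K(1) by (intro mult_mono mult_left_mono norm_mult_ineq) auto
    finally have "cmod (B (x * i0) (i0 * y)) \<le> (K * norm x * norm y) * norm i0 ^ 2"
      by (simp add: power2_eq_square algebra_simps)
    thus "cmod (B (x * i0) (i0 * y) / complex_of_real ((norm i0)\<^sup>2)) \<le> K * norm x * norm y"
      using n0 by (simp add: norm_divide pos_divide_le_eq del: of_real_power)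
  next
    fix x y :: 'a assume "x \<notin> UNIV \<or> y \<notin> UNIV" thus "B (x * i0) (i0 * y) / complex_of_real ((norm i0)\<^sup>2) = 0" by simp
  qed
qed

lemma form_pull_ball:
  fixes sc :: "complex \<Rightarrow> 'a::{real_normed_algebra,banach} \<Rightarrow> 'a"
  assumes sc: "cBA sc" and I: "closed_ideal sc I" and i0: "i0 \<in> I" "i0 \<noteq> 0"
    and B: "B \<in> bilball sc I"
  shows "(\<lambda>y z. B (y * i0) (i0 * z) / complex_of_real (norm i0 ^ 2)) \<in> bilball sc UNIV"
proof -
  have B': "B \<in> bilforms sc I" and Bb: "\<forall>x\<in>I. \<forall>y\<in>I. cmod (B x y) \<le> norm x * norm y"
    using B unfolding bilball_def by auto
  have n0: "norm i0 ^ 2 > 0" using i0 by simp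
  have yi: "y * i0 \<in> I" for y using ci_ml[OF I i0(1)] .
  have iz: "i0 * z \<in> I" for z using ci_mr[OF I i0(1)] .
  have "cmod (B (x * i0) (i0 * y) / complex_of_real (norm i0 ^ 2)) \<le> norm x * norm y" for x y
  proof -
    have "cmod (B (x * i0) (i0 * y)) \<le> norm (x * i0) * norm (i0 * y)" using Bb yi iz by blast
    also have "\<dots> \<le> (norm x * norm i0) * (norm i0 * norm y)"
      by (intro mult_mono norm_mult_ineq) auto
    finally have "cmod (B (x * i0) (i0 * y)) \<le> (norm x * norm y) * norm i0 ^ 2"
      by (simp add: power2_eq_square algebra_simps)
    thus ?thesis
      using n0 by (simp add: norm_divide pos_divide_le_eq del: of_real_power)
  qed
  thus ?thesis using form_pull[OF sc I i0 B'] unfolding bilball_def by auto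
qed

lemma form_lmod:
  fixes sc :: "complex \<Rightarrow> 'a::{real_normed_algebra,banach} \<Rightarrow> 'a"
  assumes sc: "cBA sc" and S: "closed_ideal sc S" and a: "a \<in> S" and B: "B \<in> bilforms sc S"
  shows "(\<lambda>y z. if y \<in> S \<and> z \<in> S then B (a * y) z else 0) \<in> bilforms sc S"
proof -
  obtain K where K: "K \<ge> 0" "\<forall>x\<in>S. \<forall>y\<in>S. cmod (B x y) \<le> K * norm x * norm y"
    using bf_bound[OF B] by blast
  have ay: "a * y \<in> S" for y using ci_mr[OF S a] .
  show ?thesis
  proof (rule bilformsI[where K = "K * norm a"])
    fix x1 x2 y assume "x1 \<in> S" "x2 \<in> S" "y \<in> S"
    thus "(if x1 + x2 \<in> S \<and> y \<in> S then B (a * (x1 + x2)) y else 0) =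
      (if x1 \<in> S \<and> y \<in> S then B (a * x1) y else 0) + (if x2 \<in> S \<and> y \<in> S then B (a * x2) y else 0)"
      using ci_add[OF S] by (simp add: distrib_left bf_addl[OF B ay ay])
  next
    fix x y1 y2 assume "x \<in> S" "y1 \<in> S" "y2 \<in> S"
    thus "(if x \<in> S \<and> y1 + y2 \<in> S then B (a * x) (y1 + y2) else 0) =
      (if x \<in> S \<and> y1 \<in> S then B (a * x) y1 else 0) + (if x \<in> S \<and> y2 \<in> S then B (a * x) y2 else 0)"
      using ci_add[OF S] by (simp add: bf_addr[OF B ay])
  next
    fix c x y assume "x \<in> S" "y \<in> S"
    thus "(if sc c x \<in> S \<and> y \<in> S then B (a * sc c x) y else 0) = c * (if x \<in> S \<and> y \<in> S then B (a * x) y else 0)"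
      using ci_sc[OF S] bf_scl[OF B ay[of x] \<open>y \<in> S\<close>, where c=c] cBA_mr[OF sc, of c a x] by simp
  next
    fix c x y assume "x \<in> S" "y \<in> S"
    thus "(if x \<in> S \<and> sc c y \<in> S then B (a * x) (sc c y) else 0) = c * (if x \<in> S \<and> y \<in> S then B (a * x) y else 0)"
      using ci_sc[OF S] bf_scr[OF B ay[of x] \<open>y \<in> S\<close>, where c=c] by simp
  next
    fix x y assume "x \<in> S" "y \<in> S"
    have "cmod (B (a * x) y) \<le> K * norm (a * x) * norm y" using K ay \<open>y \<in> S\<close> by blast
    also have "\<dots> \<le> K * (norm a * norm x) * norm y"
      using K(1) by (intro mult_mono mult_left_mono norm_mult_ineq) auto
    finally show "cmod (if x \<in> S \<and> y \<in> S then B (a * x) y else 0) \<le> K * norm a * norm x * norm y"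
      using \<open>x \<in> S\<close> \<open>y \<in> S\<close> by (simp add: algebra_simps)
  next
    fix x y assume "x \<notin> S \<or> y \<notin> S"
    thus "(if x \<in> S \<and> y \<in> S then B (a * x) y else 0) = 0" by auto
  qed
qed

lemma form_lmod_bound:
  fixes sc :: "complex \<Rightarrow> 'a::{real_normed_algebra,banach} \<Rightarrow> 'a"
  assumes S: "closed_ideal sc S" and a: "a \<in> S" and B: "B \<in> bilball sc S"
    and y: "y \<in> S" and z: "z \<in> S"
  shows "cmod (if y \<in> S \<and> z \<in> S then B (a * y) z else 0) \<le> norm a * norm y * norm z"
proof -
  have "cmod (B (a * y) z) \<le> norm (a * y) * norm z"
    using B ci_mr[OF S a] z unfolding bilball_def by blast
  also have "\<dots> \<le> norm a * norm y * norm z"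
    by (intro mult_right_mono norm_mult_ineq) auto
  finally show ?thesis using y z by simp
qed

lemma rep_bound:
  assumes u: "ptrep sc S u a b" and B: "B \<in> bilforms sc S"
    and K: "\<And>y z. y \<in> S \<Longrightarrow> z \<in> S \<Longrightarrow> cmod (B y z) \<le> K * norm y * norm z"
  shows "cmod (u B) \<le> K * (\<Sum>n. norm (a n) * norm (b n))"
proof -
  have ab: "\<And>n. a n \<in> S \<and> b n \<in> S" and s: "summable (\<lambda>n. norm (a n) * norm (b n))"
    and uB: "u B = (\<Sum>n. B (a n) (b n))"
    using u B unfolding ptrep_def by auto
  have le: "norm (B (a n) (b n)) \<le> K * (norm (a n) * norm (b n))" for n
    using K[of "a n" "b n"] ab by (simp add: mult.assoc)
  have sK: "summable (\<lambda>n. K * (norm (a n) * norm (b n)))" using s by (rule summable_mult)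
  have sn: "summable (\<lambda>n. norm (B (a n) (b n)))"
    by (rule summable_comparison_test[OF _ sK]) (use le in auto)
  have "cmod (u B) \<le> (\<Sum>n. norm (B (a n) (b n)))" unfolding uB by (rule summable_norm[OF sn])
  also have "\<dots> \<le> (\<Sum>n. K * (norm (a n) * norm (b n)))" by (rule suminf_le[OF le sn sK])
  also have "\<dots> = K * (\<Sum>n. norm (a n) * norm (b n))" by (rule suminf_mult[OF s])
  finally show ?thesis .
qed


definition BF :: "(complex \<Rightarrow> 'a::{real_normed_algebra,banach} \<Rightarrow> 'a) \<Rightarrow> 'a set
     \<Rightarrow> (('a \<Rightarrow> 'a \<Rightarrow> complex) \<Rightarrow> complex) \<Rightarrow> bool" where
  "BF sc S w \<longleftrightarrow> (\<exists>M. \<forall>B\<in>bilball sc S. cmod (w B) \<le> M)"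

lemma ptnorm_upper: "BF sc S w \<Longrightarrow> B \<in> bilball sc S \<Longrightarrow> cmod (w B) \<le> ptnorm sc S w"
  unfolding ptnorm_def BF_def by (auto intro!: cSUP_upper bdd_aboveI2)

lemma ptnorm_least: "(\<And>B. B \<in> bilball sc S \<Longrightarrow> cmod (w B) \<le> M) \<Longrightarrow> ptnorm sc S w \<le> M"
  unfolding ptnorm_def using zero_ball by (intro cSUP_least) auto

lemma ptnorm_nonneg: "BF sc S w \<Longrightarrow> 0 \<le> ptnorm sc S w"
  using ptnorm_upper[OF _ zero_ball] by (meson norm_ge_zero order_trans)

lemma rep_summable:
  assumes u: "ptrep sc S u a b" and B: "B \<in> bilforms sc S"
  shows "summable (\<lambda>n. B (a n) (b n))"
proof -
  obtain K where K: "K \<ge> 0" "\<forall>x\<in>S. \<forall>y\<in>S. cmod (B x y) \<le> K * norm x * norm y"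
    using bf_bound[OF B] by blast
  have ab: "\<And>n. a n \<in> S \<and> b n \<in> S" and s: "summable (\<lambda>n. norm (a n) * norm (b n))"
    using u unfolding ptrep_def by auto
  have le: "norm (B (a n) (b n)) \<le> K * (norm (a n) * norm (b n))" for n
    using K(2) ab by (simp add: mult.assoc)
  show ?thesis
    by (rule summable_comparison_test[OF _ summable_mult[OF s]]) (use le in auto)
qed

lemma rep_div:
  assumes u: "ptrep sc S u a b" and B: "B \<in> bilforms sc S"
    and B': "(\<lambda>y z. B y z / k) \<in> bilforms sc S"
  shows "u (\<lambda>y z. B y z / k) = u B / k"
proof -
  have "u (\<lambda>y z. B y z / k) = (\<Sum>n. B (a n) (b n) / k)" using u B' unfolding ptrep_def by auto
  also have "\<dots> = (\<Sum>n. B (a n) (b n)) / k" by (rule suminf_divide[OF rep_summable[OF u B]])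
  also have "\<dots> = u B / k" using u B unfolding ptrep_def by auto
  finally show ?thesis .
qed

lemma ptensor_rep: "u \<in> ptensor sc S \<Longrightarrow> \<exists>a b. ptrep sc S u a b"
  unfolding ptensor_def by blast

lemma ptensor_BF: "u \<in> ptensor sc S \<Longrightarrow> BF sc S u"
proof -
  assume "u \<in> ptensor sc S"
  then obtain a b where r: "ptrep sc S u a b" using ptensor_rep by blast
  have "cmod (u B) \<le> 1 * (\<Sum>n. norm (a n) * norm (b n))" if "B \<in> bilball sc S" for B
    using that by (intro rep_bound[OF r]) (auto simp: bilball_def)
  thus ?thesis unfolding BF_def by blast
qed

lemma lmod_BF:
  fixes sc :: "complex \<Rightarrow> 'a::{real_normed_algebra,banach} \<Rightarrow> 'a"
  assumes sc: "cBA sc" and S: "closed_ideal sc S" and a: "a \<in> S" and u: "u \<in> ptensor sc S"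
  shows "BF sc S (lmod sc S a u)"
proof -
  obtain p q where r: "ptrep sc S u p q" using ptensor_rep[OF u] by blast
  have "cmod (lmod sc S a u B) \<le> norm a * (\<Sum>n. norm (p n) * norm (q n))" if B: "B \<in> bilball sc S" for B
  proof -
    have Bf: "B \<in> bilforms sc S" using B by (simp add: bilball_def)
    have "lmod sc S a u B = u (\<lambda>y z. if y \<in> S \<and> z \<in> S then B (a * y) z else 0)"
      using Bf by (simp add: lmod_def)
    also have "cmod \<dots> \<le> norm a * (\<Sum>n. norm (p n) * norm (q n))"
      by (rule rep_bound[OF r form_lmod[OF sc S a Bf]]) (rule form_lmod_bound[OF S a B])
    finally show ?thesis .
  qed
  thus ?thesis unfolding BF_def by blast
qed

lemma diff_BF: "BF sc S u \<Longrightarrow> BF sc S v \<Longrightarrow> BF sc S (ptdiff u v)"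
proof -
  assume "BF sc S u" "BF sc S v"
  then obtain M N where M: "\<forall>B\<in>bilball sc S. cmod (u B) \<le> M" and N: "\<forall>B\<in>bilball sc S. cmod (v B) \<le> N"
    unfolding BF_def by blast
  have "cmod (ptdiff u v B) \<le> M + N" if "B \<in> bilball sc S" for B
    using M N that norm_triangle_ineq4[of "u B" "v B"] unfolding ptdiff_def by fastforce
  thus ?thesis unfolding BF_def by blast
qed

lemma scal_BF: "BF sc S u \<Longrightarrow> BF sc S (\<lambda>B. c * u B)"
proof -
  assume "BF sc S u"
  then obtain M where M: "\<forall>B\<in>bilball sc S. cmod (u B) \<le> M" unfolding BF_def by blast
  have "cmod (c * u B) \<le> cmod c * M" if "B \<in> bilball sc S" for B
    using M that by (simp add: norm_mult mult_left_mono)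
  thus ?thesis unfolding BF_def by blast
qed

definition Tm :: "(complex \<Rightarrow> 'a::{real_normed_algebra,banach} \<Rightarrow> 'a) \<Rightarrow> 'a set \<Rightarrow> 'a
     \<Rightarrow> (('a \<Rightarrow> 'a \<Rightarrow> complex) \<Rightarrow> complex) \<Rightarrow> (('a \<Rightarrow> 'a \<Rightarrow> complex) \<Rightarrow> complex)" where
  "Tm sc I i0 u = (\<lambda>B. if B \<in> bilforms sc I then complex_of_real (norm i0 ^ 2) *
       u (\<lambda>y z. B (y * i0) (i0 * z) / complex_of_real (norm i0 ^ 2)) else 0)"

lemma Tm_bound:
  fixes sc :: "complex \<Rightarrow> 'a::{real_normed_algebra,banach} \<Rightarrow> 'a"
  assumes sc: "cBA sc" and I: "closed_ideal sc I" and i0: "i0 \<in> I" "i0 \<noteq> 0"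
    and w: "BF sc UNIV w" and B: "B \<in> bilball sc I"
  shows "cmod (Tm sc I i0 w B) \<le> norm i0 ^ 2 * ptnorm sc UNIV w"
proof -
  have Bf: "B \<in> bilforms sc I" using B by (simp add: bilball_def)
  have "cmod (w (\<lambda>y z. B (y * i0) (i0 * z) / complex_of_real (norm i0 ^ 2))) \<le> ptnorm sc UNIV w"
    by (rule ptnorm_upper[OF w form_pull_ball[OF sc I i0 B]])
  thus ?thesis using Bf by (simp add: Tm_def norm_mult mult_left_mono del: of_real_power)
qed

lemma Tm_ptnorm:
  fixes sc :: "complex \<Rightarrow> 'a::{real_normed_algebra,banach} \<Rightarrow> 'a"
  assumes sc: "cBA sc" and I: "closed_ideal sc I" and i0: "i0 \<in> I" "i0 \<noteq> 0"
    and w: "BF sc UNIV w"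
  shows "ptnorm sc I (Tm sc I i0 w) \<le> norm i0 ^ 2 * ptnorm sc UNIV w"
    and "0 \<le> ptnorm sc I (Tm sc I i0 w)"
proof -
  show "ptnorm sc I (Tm sc I i0 w) \<le> norm i0 ^ 2 * ptnorm sc UNIV w"
    by (rule ptnorm_least) (rule Tm_bound[OF sc I i0 w])
  have "BF sc I (Tm sc I i0 w)" unfolding BF_def using Tm_bound[OF sc I i0 w] by blast
  thus "0 \<le> ptnorm sc I (Tm sc I i0 w)" by (rule ptnorm_nonneg)
qed

lemma Tm_lmod:
  fixes sc :: "complex \<Rightarrow> 'a::{real_normed_algebra,banach} \<Rightarrow> 'a"
  assumes sc: "cBA sc" and I: "closed_ideal sc I" and i0: "i0 \<in> I" "i0 \<noteq> 0" and a: "a \<in> I"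
  shows "lmod sc I a (Tm sc I i0 u) = Tm sc I i0 (lmod sc UNIV a u)"
proof
  fix B
  show "lmod sc I a (Tm sc I i0 u) B = Tm sc I i0 (lmod sc UNIV a u) B"
  proof (cases "B \<in> bilforms sc I")
    case False thus ?thesis by (simp add: lmod_def Tm_def)
  next
    case True
    have f1: "(\<lambda>y z. if y \<in> I \<and> z \<in> I then B (a * y) z else 0) \<in> bilforms sc I"
      by (rule form_lmod[OF sc I a True])
    have f2: "(\<lambda>y z. B (y * i0) (i0 * z) / complex_of_real (norm i0 ^ 2)) \<in> bilforms sc UNIV"
      by (rule form_pull[OF sc I i0 True])
    have yi: "y * i0 \<in> I" for y using ci_ml[OF I i0(1)] .
    have iz: "i0 * z \<in> I" for z using ci_mr[OF I i0(1)] .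
    have e: "(\<lambda>y z. (if y * i0 \<in> I \<and> i0 * z \<in> I then B (a * (y * i0)) (i0 * z) else 0) / complex_of_real (norm i0 ^ 2))
       = (\<lambda>y z. if y \<in> UNIV \<and> z \<in> UNIV then B (a * y * i0) (i0 * z) / complex_of_real (norm i0 ^ 2) else 0)"
      using yi iz by (simp add: mult.assoc)
    show ?thesis using True f1 f2 e by (simp add: lmod_def Tm_def del: of_real_power)
  qed
qed

lemma Tm_diff: "ptdiff (Tm sc I i0 u) (Tm sc I i0 v) = Tm sc I i0 (ptdiff u v)"
  unfolding ptdiff_def Tm_def by (auto simp: right_diff_distrib)

lemma Tm_scal: "(\<lambda>B. c * Tm sc I i0 u B) = Tm sc I i0 (\<lambda>B. c * u B)"
  unfolding Tm_def by (auto simp: algebra_simps)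

lemma Tm_add: "Tm sc I i0 (\<lambda>B. u B + v B) = (\<lambda>B. Tm sc I i0 u B + Tm sc I i0 v B)"
  unfolding Tm_def by (auto simp: algebra_simps)


lemma Tm_ptensor:
  fixes sc :: "complex \<Rightarrow> 'a::{real_normed_algebra,banach} \<Rightarrow> 'a"
  assumes sc: "cBA sc" and I: "closed_ideal sc I" and i0: "i0 \<in> I" "i0 \<noteq> 0"
    and u: "u \<in> ptensor sc UNIV"
  shows "Tm sc I i0 u \<in> ptensor sc I"
proof -
  obtain a b where r: "ptrep sc UNIV u a b" using ptensor_rep[OF u] by blast
  have s: "summable (\<lambda>n. norm (a n) * norm (b n))" using r unfolding ptrep_def by auto
  define k where "k = complex_of_real (norm i0 ^ 2)"
  have k0: "k \<noteq> 0" using i0 by (simp add: k_def)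
  have yi: "y * i0 \<in> I" for y using ci_ml[OF I i0(1)] .
  have iz: "i0 * z \<in> I" for z using ci_mr[OF I i0(1)] .
  have le: "norm (norm (a n * i0) * norm (i0 * b n)) \<le> norm i0 ^ 2 * (norm (a n) * norm (b n))" for n
  proof -
    have "norm (a n * i0) * norm (i0 * b n) \<le> (norm (a n) * norm i0) * (norm i0 * norm (b n))"
      by (intro mult_mono norm_mult_ineq) auto
    thus ?thesis by (simp add: power2_eq_square algebra_simps)
  qed
  have s2: "summable (\<lambda>n. norm (a n * i0) * norm (i0 * b n))"
    by (rule summable_comparison_test[OF _ summable_mult[OF s]]) (use le in blast)
  have rep: "Tm sc I i0 u B = (\<Sum>n. B (a n * i0) (i0 * b n))" if B: "B \<in> bilforms sc I" for B
  proof -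
    have f: "(\<lambda>y z. B (y * i0) (i0 * z) / k) \<in> bilforms sc UNIV"
      unfolding k_def by (rule form_pull[OF sc I i0 B])
    have sm: "summable (\<lambda>n. B (a n * i0) (i0 * b n) / k)"
      using rep_summable[OF r f] by simp
    have "Tm sc I i0 u B = k * (\<Sum>n. B (a n * i0) (i0 * b n) / k)"
      using B r f unfolding Tm_def ptrep_def k_def by (simp del: of_real_power)
    also have "\<dots> = (\<Sum>n. k * (B (a n * i0) (i0 * b n) / k))" by (rule suminf_mult[OF sm, symmetric])
    also have "\<dots> = (\<Sum>n. B (a n * i0) (i0 * b n))" using k0 by simp
    finally show ?thesis .
  qed
  have "ptrep sc I (Tm sc I i0 u) (\<lambda>n. a n * i0) (\<lambda>n. i0 * b n)"
    unfolding ptrep_def using yi iz s2 rep by blast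
  moreover have "\<forall>B. B \<notin> bilforms sc I \<longrightarrow> Tm sc I i0 u B = 0" by (simp add: Tm_def)
  ultimately show ?thesis unfolding ptensor_def by blast
qed

lemma phi_form:
  fixes sc :: "complex \<Rightarrow> 'a::{real_normed_algebra,banach} \<Rightarrow> 'a"
  assumes sc: "cBA sc" and ph: "\<phi> \<in> characters sc UNIV" and S: "closed_ideal sc S"
  shows "(\<lambda>y z. if y \<in> S \<and> z \<in> S then \<phi> y * \<phi> z else 0) \<in> bilforms sc S"
proof (rule bilformsI[where K=1])
  fix x y show "cmod (if x \<in> S \<and> y \<in> S then \<phi> x * \<phi> y else 0) \<le> 1 * norm x * norm y"
    using char_bound[OF sc ph, of x] char_bound[OF sc ph, of y]
    by (auto simp: norm_mult intro: mult_mono)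
qed (auto simp: char_add[OF ph] char_sc[OF ph] algebra_simps ci_add[OF S] ci_sc[OF S])

lemma tpi_phi:
  fixes sc :: "complex \<Rightarrow> 'a::{real_normed_algebra,banach} \<Rightarrow> 'a"
  assumes sc: "cBA sc" and ph: "\<phi> \<in> characters sc UNIV" and u: "u \<in> ptensor sc S"
    and S: "closed_ideal sc S"
  shows "\<phi> (tpi sc S u) = u (\<lambda>y z. if y \<in> S \<and> z \<in> S then \<phi> y * \<phi> z else 0)"
proof -
  define r where "r = (SOME r. ptrep sc S u (fst r) (snd r))"
  have "\<exists>r. ptrep sc S u (fst r) (snd r)" using ptensor_rep[OF u] by auto
  hence R: "ptrep sc S u (fst r) (snd r)" unfolding r_def by (rule someI_ex)
  define a where "a = fst r"
  define b where "b = snd r"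
  have ab: "\<And>n. a n \<in> S \<and> b n \<in> S" and s: "summable (\<lambda>n. norm (a n) * norm (b n))"
    using R unfolding ptrep_def a_def b_def by auto
  have t: "tpi sc S u = (\<Sum>n. a n * b n)" unfolding tpi_def r_def[symmetric] a_def b_def Let_def ..
  have sab: "summable (\<lambda>n. a n * b n)"
    by (rule summable_comparison_test[OF _ s]) (auto intro: norm_mult_ineq)
  have "\<phi> (\<Sum>n. a n * b n) = (\<Sum>n. \<phi> (a n * b n))"
    by (rule bounded_linear.suminf[OF char_bl[OF sc ph] sab])
  also have "\<dots> = (\<Sum>n. (if a n \<in> S \<and> b n \<in> S then \<phi> (a n) * \<phi> (b n) else 0))"
    using ab by (simp add: char_mult[OF ph])
  also have "\<dots> = u (\<lambda>y z. if y \<in> S \<and> z \<in> S then \<phi> y * \<phi> z else 0)"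
    using R phi_form[OF sc ph S] unfolding ptrep_def a_def b_def by auto
  finally show ?thesis unfolding t .
qed

lemma Tm_phi:
  fixes sc :: "complex \<Rightarrow> 'a::{real_normed_algebra,banach} \<Rightarrow> 'a"
  assumes sc: "cBA sc" and ph: "\<phi> \<in> characters sc UNIV" and I: "closed_ideal sc I"
    and i0: "i0 \<in> I" "i0 \<noteq> 0" and p1: "\<phi> i0 = 1"
    and u: "u \<in> ptensor sc UNIV"
  shows "Tm sc I i0 u (\<lambda>y z. if y \<in> I \<and> z \<in> I then \<phi> y * \<phi> z else 0)
       = u (\<lambda>y z. if y \<in> UNIV \<and> z \<in> UNIV then \<phi> y * \<phi> z else 0)"
proof -
  obtain a b where r: "ptrep sc UNIV u a b" using ptensor_rep[OF u] by blast
  define k where "k = complex_of_real (norm i0 ^ 2)"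
  have k0: "k \<noteq> 0" using i0 by (simp add: k_def)
  have yi: "y * i0 \<in> I" for y using ci_ml[OF I i0(1)] .
  have iz: "i0 * z \<in> I" for z using ci_mr[OF I i0(1)] .
  define P where "P = (\<lambda>y z. if y \<in> I \<and> z \<in> I then \<phi> y * \<phi> z else 0)"
  define Q where "Q = (\<lambda>(y::'a) (z::'a). if y \<in> UNIV \<and> z \<in> UNIV then \<phi> y * \<phi> z else 0)"
  have PI: "P \<in> bilforms sc I" unfolding P_def by (rule phi_form[OF sc ph I])
  have QU: "Q \<in> bilforms sc UNIV" unfolding Q_def by (rule phi_form[OF sc ph ci_UNIV])
  have e: "(\<lambda>y z. P (y * i0) (i0 * z) / k) = (\<lambda>y z. Q y z / k)"
    using yi iz p1 by (simp add: P_def Q_def char_mult[OF ph])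
  have f: "(\<lambda>y z. Q y z / k) \<in> bilforms sc UNIV"
    using form_pull[OF sc I i0 PI] e unfolding k_def by simp
  have "Tm sc I i0 u P = k * u (\<lambda>y z. Q y z / k)"
    using PI e unfolding Tm_def k_def by (simp del: of_real_power)
  also have "\<dots> = k * (u Q / k)" by (simp add: rep_div[OF r QU f])
  also have "\<dots> = u Q" using k0 by simp
  finally show ?thesis unfolding P_def Q_def .
qed


lemma lim_T:
  fixes sc :: "complex \<Rightarrow> 'a::{real_normed_algebra,banach} \<Rightarrow> 'a"
  assumes sc: "cBA sc" and I: "closed_ideal sc I" and i0: "i0 \<in> I" "i0 \<noteq> 0"
    and ev: "eventually (\<lambda>\<rho>. BF sc UNIV (w \<rho>)) F"
    and lim: "((\<lambda>\<rho>. ptnorm sc UNIV (w \<rho>)) \<longlongrightarrow> 0) F"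
  shows "((\<lambda>\<rho>. ptnorm sc I (Tm sc I i0 (w \<rho>))) \<longlongrightarrow> 0) F"
proof (rule real_tendsto_sandwich[where f="\<lambda>_. 0" and h="\<lambda>\<rho>. norm i0 ^ 2 * ptnorm sc UNIV (w \<rho>)"])
  show "eventually (\<lambda>\<rho>. 0 \<le> ptnorm sc I (Tm sc I i0 (w \<rho>))) F"
    using ev by eventually_elim (rule Tm_ptnorm(2)[OF sc I i0])
  show "eventually (\<lambda>\<rho>. ptnorm sc I (Tm sc I i0 (w \<rho>)) \<le> norm i0 ^ 2 * ptnorm sc UNIV (w \<rho>)) F"
    using ev by eventually_elim (rule Tm_ptnorm(1)[OF sc I i0])
  show "((\<lambda>_. 0) \<longlongrightarrow> (0::real)) F" by simp
  show "((\<lambda>\<rho>. norm i0 ^ 2 * ptnorm sc UNIV (w \<rho>)) \<longlongrightarrow> 0) F"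
    using tendsto_mult[OF tendsto_const lim, of "norm i0 ^ 2"] by simp
qed

lemma Tm_bdd:
  fixes sc :: "complex \<Rightarrow> 'a::{real_normed_algebra,banach} \<Rightarrow> 'a"
  assumes sc: "cBA sc" and I: "closed_ideal sc I" and i0: "i0 \<in> I" "i0 \<noteq> 0"
    and b: "bdd_lin_pt sc UNIV \<rho>"
  shows "bdd_lin_pt sc I (\<lambda>x. Tm sc I i0 (\<rho> x))"
proof -
  have pt: "\<rho> x \<in> ptensor sc UNIV" for x using b unfolding bdd_lin_pt_def by blast
  have add: "\<rho> (x + y) = (\<lambda>B. \<rho> x B + \<rho> y B)" for x y using b unfolding bdd_lin_pt_def by blast
  have scl: "\<rho> (sc c x) = (\<lambda>B. c * \<rho> x B)" for c x using b unfolding bdd_lin_pt_def by blast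
  obtain K where K: "\<And>x. ptnorm sc UNIV (\<rho> x) \<le> K * norm x" using b unfolding bdd_lin_pt_def by blast
  have "ptnorm sc I (Tm sc I i0 (\<rho> x)) \<le> (norm i0 ^ 2 * K) * norm x" for x
  proof -
    have "ptnorm sc I (Tm sc I i0 (\<rho> x)) \<le> norm i0 ^ 2 * ptnorm sc UNIV (\<rho> x)"
      by (rule Tm_ptnorm(1)[OF sc I i0 ptensor_BF[OF pt]])
    also have "\<dots> \<le> norm i0 ^ 2 * (K * norm x)" by (intro mult_left_mono K) auto
    finally show ?thesis by (simp add: mult.assoc)
  qed
  thus ?thesis unfolding bdd_lin_pt_def
    using Tm_ptensor[OF sc I i0 pt] by (auto simp: add scl Tm_add Tm_scal)
qed

theorem proposition2p8:
  fixes sc :: "complex \<Rightarrow> 'a::{real_normed_algebra,banach} \<Rightarrow> 'a"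
    and \<phi> :: "'a \<Rightarrow> complex" and I :: "'a set"
  assumes "cBA sc"
    and "\<phi> \<in> characters sc UNIV"
    and "closed_ideal sc I"
    and "\<exists>x\<in>I. \<phi> x \<noteq> 0"
    and "approx_left_biproj sc UNIV \<phi>"
  shows "approx_left_biproj sc I \<phi>"
proof -
  note sc = assms(1) and ph = assms(2) and I = assms(3)
  obtain F where F0: "F \<noteq> bot" and Fb: "eventually (bdd_lin_pt sc UNIV) F"
    and L: "\<And>a x. ((\<lambda>\<rho>. ptnorm sc UNIV (ptdiff (lmod sc UNIV a (\<rho> x)) (\<rho> (a * x)))) \<longlongrightarrow> 0) F \<and>
           ((\<lambda>\<rho>. ptnorm sc UNIV (ptdiff (\<rho> (x * a)) (\<lambda>B. \<phi> a * \<rho> x B))) \<longlongrightarrow> 0) F \<and>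
           ((\<lambda>\<rho>. \<phi> (tpi sc UNIV (\<rho> x)) - \<phi> x) \<longlongrightarrow> 0) F"
    using assms(5) unfolding approx_left_biproj_def by blast
  obtain i1 where i1: "i1 \<in> I" "\<phi> i1 \<noteq> 0" using assms(4) by blast
  define i0 where "i0 = sc (1 / \<phi> i1) i1"
  have i0I: "i0 \<in> I" unfolding i0_def by (rule ci_sc[OF I i1(1)])
  have p1: "\<phi> i0 = 1" using i1(2) by (simp add: i0_def char_sc[OF ph])
  have i00: "i0 \<noteq> 0" using p1 char_zero[OF ph] by auto
  note i0 = i0I i00
  define G where "G = (\<lambda>(\<rho>::'a \<Rightarrow> (('a \<Rightarrow> 'a \<Rightarrow> complex) \<Rightarrow> complex)) (x::'a). Tm sc I i0 (\<rho> x))"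
  show ?thesis unfolding approx_left_biproj_def
  proof (intro exI[of _ "filtermap G F"] conjI ballI)
    show "filtermap G F \<noteq> bot" using F0 by (simp add: filtermap_bot_iff)
    show "eventually (bdd_lin_pt sc I) (filtermap G F)"
      unfolding eventually_filtermap G_def using Fb
      by (rule eventually_mono) (rule Tm_bdd[OF sc I i0])
  next
    fix a x assume a: "a \<in> I" and x: "x \<in> I"
    show "((\<lambda>\<rho>. ptnorm sc I (ptdiff (lmod sc I a (\<rho> x)) (\<rho> (a * x)))) \<longlongrightarrow> 0) (filtermap G F)"
      unfolding filterlim_filtermap G_def Tm_lmod[OF sc I i0 a] Tm_diff
    proof (rule lim_T[OF sc I i0])
      show "eventually (\<lambda>\<rho>. BF sc UNIV (ptdiff (lmod sc UNIV a (\<rho> x)) (\<rho> (a * x)))) F"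
        using Fb
      proof (rule eventually_mono)
        fix \<rho> assume "bdd_lin_pt sc UNIV \<rho>"
        hence pt: "\<And>y. \<rho> y \<in> ptensor sc UNIV" unfolding bdd_lin_pt_def by blast
        show "BF sc UNIV (ptdiff (lmod sc UNIV a (\<rho> x)) (\<rho> (a * x)))"
          by (rule diff_BF[OF lmod_BF[OF sc ci_UNIV _ pt] ptensor_BF[OF pt]]) simp
      qed
    qed (use L[of a x] in \<open>rule conjunct1\<close>)
    show "((\<lambda>\<rho>. ptnorm sc I (ptdiff (\<rho> (x * a)) (\<lambda>B. \<phi> a * \<rho> x B))) \<longlongrightarrow> 0) (filtermap G F)"
      unfolding filterlim_filtermap G_def Tm_scal Tm_diff
    proof (rule lim_T[OF sc I i0])
      show "eventually (\<lambda>\<rho>. BF sc UNIV (ptdiff (\<rho> (x * a)) (\<lambda>B. \<phi> a * \<rho> x B))) F"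
        using Fb
      proof (rule eventually_mono)
        fix \<rho> assume "bdd_lin_pt sc UNIV \<rho>"
        hence pt: "\<And>y. \<rho> y \<in> ptensor sc UNIV" unfolding bdd_lin_pt_def by blast
        show "BF sc UNIV (ptdiff (\<rho> (x * a)) (\<lambda>B. \<phi> a * \<rho> x B))"
          by (rule diff_BF[OF ptensor_BF[OF pt] scal_BF[OF ptensor_BF[OF pt]]])
      qed
    qed (use L[of a x] in \<open>rule conjunct1[OF conjunct2]\<close>)
    have "eventually (\<lambda>\<rho>. \<phi> (tpi sc UNIV (\<rho> x)) - \<phi> x = \<phi> (tpi sc I (Tm sc I i0 (\<rho> x))) - \<phi> x) F"
      using Fb
    proof (rule eventually_mono)
      fix \<rho> assume "bdd_lin_pt sc UNIV \<rho>"
      hence pt: "\<rho> x \<in> ptensor sc UNIV" unfolding bdd_lin_pt_def by blast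
      show "\<phi> (tpi sc UNIV (\<rho> x)) - \<phi> x = \<phi> (tpi sc I (Tm sc I i0 (\<rho> x))) - \<phi> x"
        using tpi_phi[OF sc ph Tm_ptensor[OF sc I i0 pt] I] tpi_phi[OF sc ph pt ci_UNIV]
          Tm_phi[OF sc ph I i0 p1 pt] by simp
    qed
    note E = tendsto_cong[OF this, of 0]
    have L3: "((\<lambda>\<rho>. \<phi> (tpi sc UNIV (\<rho> x)) - \<phi> x) \<longlongrightarrow> 0) F" using L[of a x] by (rule conjunct2[OF conjunct2])
    show "((\<lambda>\<rho>. \<phi> (tpi sc I (\<rho> x)) - \<phi> x) \<longlongrightarrow> 0) (filtermap G F)"
      unfolding filterlim_filtermap G_def using E L3 by (rule iffD1)
  qed
qed

end
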